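(* For $a\in\{0,1\}$ let $f^a(\rho)=\Pr\{R=\rho\mid A=a,Y=1\}$ for $\rho\in\mathcal{R}$. Suppose that for all $\rho,\rho'\in\mathcal{R}$ with $\rho>\rho'$ we have $f^0(\rho)-f^1(\rho)>f^0(\rho')-f^1(\rho')$ and $f_R(\rho)<f_R(\rho')$, and that $f^0(\rho)-f^1(\rho)\ge0$ for $\rho\in\{\rho_2,\dots,\rho_{n'}\}$. Then: 1. $\gamma(\epsilon)>0$ for all $\epsilon>0$ (i.e. $\mathscr{A}_\epsilon$ is always biased in favor of individuals with $A=0$); 2. $\gamma(\epsilon)<\gamma_\infty$ for all $\epsilon\ge0$, where $\gamma_\infty=\lim_{\epsilon\to+\infty}\gamma(\epsilon)$.
   Context: There are $n$ individuals indexed by $\mathcal{N}=\{1,\dots,n\}$. Individual $i$ is described by a random tuple $(X_i,A_i,Y_i)$, with features $X_i\in\mathcal{X}$, protected attribute $A_i\in\{0,1\}$ and qualification state $Y_i\in\{0,1\}$; the tuples are i.i.d. with a common distribution $\mathsf{F}$, and $(X,A,Y)$ denotes a generic tuple with distribution $\mathsf{F}$. A fixed function $r:\mathcal{X}\to\mathcal{R}$ is given, with $\mathcal{R}=\{\rho_1,\dots,\rho_{n'}\}\subset[0,1]$ finite, $\rho_1=0$, $\rho_{n'}=1$; $R_i=r(X_i)$, $R=r(X)$, and $f_R$ is the probability mass function of $R$. Conditioning events $\{A=a,Y=1\}$ are assumed to have positive probability. For $\epsilon\ge0$, define $Z_{i,\epsilon}=\exp(\epsilon R_i/2)/\sum_{j=1}^n\exp(\epsilon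 R_j/2)$, which is the probability that the exponential mechanism $\mathscr{A}_\epsilon$ selects $i$ given the scores, and $\gamma(\epsilon)=E\{Z_{i,\epsilon}\mid A_i=0,Y_i=1\}-E\{Z_{i,\epsilon}\mid A_i=1,Y_i=1\}$ (independent of $i$). The limit $\gamma_\infty=\lim_{\epsilon\to+\infty}\gamma(\epsilon)$ exists. *)

theory Defs
  imports "HOL-Probability.Probability"
begin

text \<open>A generic individual is a tuple (X, A, Y) :: 'x \<times> nat \<times> nat, distributed according to
  the probability measure F.\<close>

definition pop :: "('x \<times> nat \<times> nat) measure \<Rightarrow> nat \<Rightarrow> (nat \<Rightarrow> 'x \<times> nat \<times> nat) measure" where
  "pop F n = PiM {1..n} (\<lambda>_. F)"

definition cond_prob :: "'a measure \<Rightarrow> ('a \<Rightarrow> bool) \<Rightarrow> ('a \<Rightarrow> bool) \<Rightarrow> real" where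
  "cond_prob M P B = measure M {x \<in> space M. P x \<and> B x} / measure M {x \<in> space M. B x}"

definition cond_expect :: "'a measure \<Rightarrow> ('a \<Rightarrow> real) \<Rightarrow> ('a \<Rightarrow> bool) \<Rightarrow> real" where
  "cond_expect M f B = (\<integral>x. f x * indicator {x \<in> space M. B x} x \<partial>M) / measure M {x \<in> space M. B x}"

definition Zsel :: "nat \<Rightarrow> ('x \<Rightarrow> real) \<Rightarrow> nat \<Rightarrow> real \<Rightarrow> (nat \<Rightarrow> 'x \<times> nat \<times> nat) \<Rightarrow> real" where
  "Zsel n r i \<epsilon> \<omega> = exp (\<epsilon> * r (fst (\<omega> i)) / 2) / (\<Sum>j\<in>{1..n}. exp (\<epsilon> * r (fst (\<omega> j)) / 2))"

definition gamma :: "('x \<times> nat \<times> nat) measure \<Rightarrow> ('x \<Rightarrow> real) \<Rightarrow> nat \<Rightarrow> nat \<Rightarrow> real \<Rightarrow> real" where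
  "gamma F r n i \<epsilon> =
     cond_expect (pop F n) (Zsel n r i \<epsilon>) (\<lambda>\<omega>. fst (snd (\<omega> i)) = 0 \<and> snd (snd (\<omega> i)) = 1)
   - cond_expect (pop F n) (Zsel n r i \<epsilon>) (\<lambda>\<omega>. fst (snd (\<omega> i)) = 1 \<and> snd (snd (\<omega> i)) = 1)"

definition fA :: "('x \<times> nat \<times> nat) measure \<Rightarrow> ('x \<Rightarrow> real) \<Rightarrow> nat \<Rightarrow> real \<Rightarrow> real" where
  "fA F r a \<rho> = cond_prob F (\<lambda>w. r (fst w) = \<rho>) (\<lambda>w. fst (snd w) = a \<and> snd (snd w) = 1)"

definition fR :: "('x \<times> nat \<times> nat) measure \<Rightarrow> ('x \<Rightarrow> real) \<Rightarrow> real \<Rightarrow> real" where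
  "fR F r \<rho> = measure F {w \<in> space F. r (fst w) = \<rho>}"

end

theory Submission
  imports Defs
begin
lemma exp_lin_top:
  assumes b: "(b::real) > 0" shows "filterlim (\<lambda>\<epsilon>::real. exp (\<epsilon> * b / 2)) at_top at_top"
proof -
  have "filterlim (\<lambda>\<epsilon>::real. (b/2) * \<epsilon>) at_top at_top"
    by (rule filterlim_tendsto_pos_mult_at_top[OF tendsto_const]) (simp_all add: b filterlim_ident)
  then have "filterlim (\<lambda>\<epsilon>::real. exp ((b/2) * \<epsilon>)) at_top at_top"
    by (rule filterlim_compose[OF exp_at_top])
  then show ?thesis by (simp add: ac_simps)
qed

lemma exp_lin_bot:
  assumes b: "(b::real) < 0" shows "((\<lambda>\<epsilon>::real. exp (\<epsilon> * b / 2)) \<longlongrightarrow> 0) at_top"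
proof -
  have "filterlim (\<lambda>\<epsilon>::real. (b/2) * \<epsilon>) at_bot at_top"
    by (rule filterlim_tendsto_neg_mult_at_bot[OF tendsto_const]) (simp_all add: b filterlim_ident)
  then have "((\<lambda>\<epsilon>::real. exp ((b/2) * \<epsilon>)) \<longlongrightarrow> 0) at_top"
    by (rule filterlim_compose[OF exp_at_bot])
  then show ?thesis by (simp add: ac_simps)
qed

lemma integral_PiM_finite:
  fixes T :: "'a \<Rightarrow> 'v" and \<Phi> :: "('i \<Rightarrow> 'v) \<Rightarrow> real" and I :: "'i set"
  assumes F: "prob_space F" and I: "finite I" and T: "T \<in> measurable F (count_space UNIV)"
    and TV: "\<forall>w\<in>space F. T w \<in> V" and V: "finite V"
  shows "(\<integral>\<omega>. \<Phi> (\<lambda>j\<in>I. T (\<omega> j)) \<partial>PiM I (\<lambda>_. F))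
       = (\<Sum>c\<in>PiE I (\<lambda>_. V). \<Phi> c * (\<Prod>j\<in>I. measure F {w\<in>space F. T w = c j}))"
proof -
  interpret F: prob_space F by fact
  interpret P: finite_product_prob_space "\<lambda>_. F" I
    by unfold_locales (rule I)
  have ms: "{w\<in>space F. T w = v} \<in> sets F" for v
  proof -
    have "T -` {v} \<inter> space F \<in> sets F" by (rule measurable_sets[OF T]) auto
    moreover have "T -` {v} \<inter> space F = {w\<in>space F. T w = v}" by auto
    ultimately show ?thesis by simp
  qed
  define cyl where "cyl c = PiE I (\<lambda>j. {w\<in>space F. T w = c j})" for c :: "'i \<Rightarrow> 'v"
  have cyl_sets: "cyl c \<in> sets (PiM I (\<lambda>_. F))" for c
    unfolding cyl_def using ms by (intro sets_PiM_I_finite I) auto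
  have ind: "indicator (cyl c) \<omega> = (if c = (\<lambda>j\<in>I. T (\<omega> j)) then 1 else (0::real))"
    if "\<omega> \<in> space (PiM I (\<lambda>_. F))" "c \<in> PiE I (\<lambda>_. V)" for c \<omega>
  proof -
    have om: "\<omega> \<in> PiE I (\<lambda>_. space F)" using that(1) by (simp add: space_PiM)
    have "\<omega> \<in> cyl c \<longleftrightarrow> c = (\<lambda>j\<in>I. T (\<omega> j))"
    proof
      assume "\<omega> \<in> cyl c"
      then show "c = (\<lambda>j\<in>I. T (\<omega> j))"
        using that(2) unfolding cyl_def by (auto simp: PiE_iff extensional_def fun_eq_iff)
    next
      assume "c = (\<lambda>j\<in>I. T (\<omega> j))"
      then show "\<omega> \<in> cyl c" using om unfolding cyl_def by (auto simp: PiE_iff)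
    qed
    then show ?thesis by (simp add: indicator_def)
  qed
  have inC: "(\<lambda>j\<in>I. T (\<omega> j)) \<in> PiE I (\<lambda>_. V)" if "\<omega> \<in> space (PiM I (\<lambda>_. F))" for \<omega>
    using that TV by (auto simp: space_PiM PiE_iff)
  have "(\<integral>\<omega>. \<Phi> (\<lambda>j\<in>I. T (\<omega> j)) \<partial>PiM I (\<lambda>_. F))
      = (\<integral>\<omega>. (\<Sum>c\<in>PiE I (\<lambda>_. V). \<Phi> c * indicator (cyl c) \<omega>) \<partial>PiM I (\<lambda>_. F))"
  proof (rule Bochner_Integration.integral_cong[OF refl])
    fix \<omega> assume om: "\<omega> \<in> space (PiM I (\<lambda>_. F))"
    have "(\<Sum>c\<in>PiE I (\<lambda>_. V). \<Phi> c * indicator (cyl c) \<omega>)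
        = (\<Sum>c\<in>PiE I (\<lambda>_. V). if c = (\<lambda>j\<in>I. T (\<omega> j)) then \<Phi> c else 0)"
      by (rule sum.cong[OF refl]) (simp add: ind[OF om])
    also have "\<dots> = \<Phi> (\<lambda>j\<in>I. T (\<omega> j))"
      using inC[OF om] by (simp add: sum.delta' finite_PiE I V)
    finally show "\<Phi> (\<lambda>j\<in>I. T (\<omega> j)) = (\<Sum>c\<in>PiE I (\<lambda>_. V). \<Phi> c * indicator (cyl c) \<omega>)" by simp
  qed
  also have "\<dots> = (\<Sum>c\<in>PiE I (\<lambda>_. V). \<Phi> c * measure (PiM I (\<lambda>_. F)) (cyl c))"
    by (subst Bochner_Integration.integral_sum)
       (auto intro!: sum.cong integrable_real_mult_indicator cyl_sets simp: P.emeasure_eq_measure sets.Int_space_eq2[OF cyl_sets])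
  also have "\<dots> = (\<Sum>c\<in>PiE I (\<lambda>_. V). \<Phi> c * (\<Prod>j\<in>I. measure F {w\<in>space F. T w = c j}))"
    unfolding cyl_def by (intro sum.cong refl arg_cong2[where f="(*)"] P.prob_times) (use ms in auto)
  finally show ?thesis .
qed

lemma sum_PiE_insert:
  assumes J: "finite J" and i: "i \<notin> J" and V: "finite V"
  shows "(\<Sum>c\<in>PiE (insert i J) (\<lambda>_. V). h c) = (\<Sum>v\<in>V. \<Sum>c\<in>PiE J (\<lambda>_. V). h (c(i:=v)))"
proof -
  have inj: "inj_on (\<lambda>(y, g). g(i := y)) (V \<times> PiE J (\<lambda>_. V))"
  proof (rule inj_onI, clarsimp)
    fix y g y' g'
    assume g: "g \<in> PiE J (\<lambda>_. V)" and g': "g' \<in> PiE J (\<lambda>_. V)" and eq: "g(i := y) = g'(i := y')"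
    from eq have "y = y'" by (metis fun_upd_same)
    moreover have "g = g'"
    proof
      fix x show "g x = g' x"
      proof (cases "x = i")
        case True then show ?thesis using g g' i by (auto simp: PiE_iff extensional_def)
      next
        case False then show ?thesis using eq by (metis fun_upd_other)
      qed
    qed
    ultimately show "y = y' \<and> g = g'" by simp
  qed
  have "(\<Sum>c\<in>PiE (insert i J) (\<lambda>_. V). h c) = (\<Sum>x\<in>V \<times> PiE J (\<lambda>_. V). h ((\<lambda>(y, g). g(i := y)) x))"
    unfolding PiE_insert_eq by (rule sum.reindex[OF inj, unfolded comp_def])
  also have "\<dots> = (\<Sum>(v,c)\<in>V \<times> PiE J (\<lambda>_. V). h (c(i:=v)))"
    by (rule sum.cong) auto
  also have "\<dots> = (\<Sum>v\<in>V. \<Sum>c\<in>PiE J (\<lambda>_. V). h (c(i:=v)))"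
    by (rule sum.cartesian_product[symmetric])
  finally show ?thesis .
qed

definition sw :: "'i \<Rightarrow> 'i \<Rightarrow> 'i \<Rightarrow> 'i" where
  "sw i k j = (if j = i then k else if j = k then i else j)"

lemma sw_sw[simp]: "sw i k (sw i k j) = j"
  by (auto simp: sw_def)

lemma bij_sw: "i \<in> I \<Longrightarrow> k \<in> I \<Longrightarrow> bij_betw (sw i k) I I"
  by (rule bij_betwI[where g="sw i k"]) (auto simp: sw_def)

lemma sum_sw: "i \<in> I \<Longrightarrow> k \<in> I \<Longrightarrow> (\<Sum>j\<in>I. g (sw i k j)) = (\<Sum>j\<in>I. (g j :: 'b::comm_monoid_add))"
  by (rule sum.reindex_bij_betw[OF bij_sw])

lemma prod_sw: "i \<in> I \<Longrightarrow> k \<in> I \<Longrightarrow> (\<Prod>j\<in>I. g (sw i k j)) = (\<Prod>j\<in>I. (g j :: 'b::comm_monoid_mult))"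
  by (rule prod.reindex_bij_betw[OF bij_sw])

lemma sum_PiE_sw:
  assumes "i \<in> I" "k \<in> I"
  shows "(\<Sum>c\<in>PiE I (\<lambda>_. V). h (c \<circ> sw i k)) = (\<Sum>c\<in>PiE I (\<lambda>_. V). (h c :: 'b::comm_monoid_add))"
proof (rule sum.reindex_bij_betw)
  have mem: "c \<circ> sw i k \<in> PiE I (\<lambda>_. V)" if "c \<in> PiE I (\<lambda>_. V)" for c
    using that assms by (auto simp: PiE_iff extensional_def sw_def)
  show "bij_betw (\<lambda>c. c \<circ> sw i k) (PiE I (\<lambda>_. V)) (PiE I (\<lambda>_. V))"
  proof (rule bij_betwI[where g="\<lambda>c. c \<circ> sw i k"])
    show "(\<lambda>c. c \<circ> sw i k) \<in> PiE I (\<lambda>_. V) \<rightarrow> PiE I (\<lambda>_. V)" using mem by auto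
    show "(\<lambda>c. c \<circ> sw i k) \<in> PiE I (\<lambda>_. V) \<rightarrow> PiE I (\<lambda>_. V)" using mem by auto
    show "\<And>x. (x \<circ> sw i k) \<circ> sw i k = x" by (simp add: fun_eq_iff)
    show "\<And>x. (x \<circ> sw i k) \<circ> sw i k = x" by (simp add: fun_eq_iff)
  qed
qed

definition smax :: "real \<Rightarrow> 'i set \<Rightarrow> ('i \<Rightarrow> real) \<Rightarrow> 'i \<Rightarrow> real" where
  "smax \<epsilon> I x k = exp (\<epsilon> * x k / 2) / (\<Sum>j\<in>I. exp (\<epsilon> * x j / 2))"

definition amax :: "'i set \<Rightarrow> ('i \<Rightarrow> real) \<Rightarrow> 'i \<Rightarrow> real" where
  "amax I x k = (if x k = Max (x ` I) then 1 / real (card {j\<in>I. x j = Max (x ` I)}) else 0)"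

lemma smax_den_pos: fixes x :: "'i \<Rightarrow> real" shows "finite I \<Longrightarrow> I \<noteq> {} \<Longrightarrow> (\<Sum>j\<in>I. exp (\<epsilon> * x j / 2)) > 0"
  by (rule sum_pos) auto

lemma smax_pos: "finite I \<Longrightarrow> k \<in> I \<Longrightarrow> smax \<epsilon> I x k > 0"
  unfolding smax_def by (intro divide_pos_pos smax_den_pos) auto

lemma smax_sum: "finite I \<Longrightarrow> I \<noteq> {} \<Longrightarrow> (\<Sum>k\<in>I. smax \<epsilon> I x k) = 1"
  unfolding smax_def using smax_den_pos[of I \<epsilon> x]
  by (simp add: sum_divide_distrib[symmetric])

lemma smax_alt: "finite I \<Longrightarrow> k \<in> I \<Longrightarrow> smax \<epsilon> I x k = 1 / (\<Sum>j\<in>I. exp (\<epsilon> * (x j - x k) / 2))"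
proof -
  assume I: "finite I" "k \<in> I"
  have "(\<Sum>j\<in>I. exp (\<epsilon> * x j / 2)) = exp (\<epsilon> * x k / 2) * (\<Sum>j\<in>I. exp (\<epsilon> * (x j - x k) / 2))"
  proof -
    have e: "exp (\<epsilon> * x j / 2) = exp (\<epsilon> * x k / 2) * exp (\<epsilon> * (x j - x k) / 2)" for j
    proof -
      have "exp (\<epsilon> * x k / 2) * exp (\<epsilon> * (x j - x k) / 2) = exp (\<epsilon> * x k / 2 + \<epsilon> * (x j - x k) / 2)"
        by (rule exp_add[symmetric])
      also have "\<epsilon> * x k / 2 + \<epsilon> * (x j - x k) / 2 = \<epsilon> * x j / 2" by (simp add: field_simps)
      finally show ?thesis by simp
    qed
    show ?thesis unfolding sum_distrib_left by (rule sum.cong[OF refl e])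
  qed
  then show ?thesis unfolding smax_def by simp
qed

lemma smax_lim:
  assumes I: "finite I" "k \<in> I"
  shows "((\<lambda>\<epsilon>. smax \<epsilon> I x k) \<longlongrightarrow> amax I x k) at_top"
proof -
  define M where "M = Max (x ` I)"
  have xM: "x j \<le> M" if "j \<in> I" for j using I that unfolding M_def by auto
  have "M \<in> x ` I" unfolding M_def using I by (intro Max_in) auto
  then obtain j0 where j0: "j0 \<in> I" "x j0 = M" by auto
  have eq: "smax \<epsilon> I x k = 1 / (\<Sum>j\<in>I. exp (\<epsilon> * (x j - x k) / 2))" for \<epsilon>
    by (rule smax_alt[OF I])
  show ?thesis
  proof (cases "x k = M")
    case True
    have lim: "((\<lambda>\<epsilon>. exp (\<epsilon> * (x j - x k) / 2)) \<longlongrightarrow> (if x j = M then 1 else 0)) at_top" if "j \<in> I" for j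
    proof (cases "x j = M")
      case True then show ?thesis using \<open>x k = M\<close> by simp
    next
      case False
      then have "x j - x k < 0" using xM[OF that] \<open>x k = M\<close> by simp
      then have "((\<lambda>\<epsilon>. exp (\<epsilon> * (x j - x k) / 2)) \<longlongrightarrow> 0) at_top" by (rule exp_lin_bot)
      then show ?thesis using False by simp
    qed
    have "((\<lambda>\<epsilon>. \<Sum>j\<in>I. exp (\<epsilon> * (x j - x k) / 2)) \<longlongrightarrow> (\<Sum>j\<in>I. if x j = M then 1 else 0)) at_top"
      by (rule tendsto_sum) (rule lim)
    moreover have "(\<Sum>j\<in>I. if x j = M then 1 else (0::real)) = real (card {j\<in>I. x j = M})"
      using I by (simp add: sum.If_cases Int_def)
    moreover have "card {j\<in>I. x j = M} > 0" using I True by (auto simp: card_gt_0_iff)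
    ultimately have "((\<lambda>\<epsilon>. 1 / (\<Sum>j\<in>I. exp (\<epsilon> * (x j - x k) / 2))) \<longlongrightarrow> 1 / real (card {j\<in>I. x j = M})) at_top"
      by (intro tendsto_divide tendsto_const) auto
    then show ?thesis unfolding eq amax_def M_def[symmetric] using True by simp
  next
    case False
    then have pos: "x j0 - x k > 0" using xM[OF I(2)] j0 by simp
    then have lim: "filterlim (\<lambda>\<epsilon>. exp (\<epsilon> * (x j0 - x k) / 2)) at_top at_top" by (rule exp_lin_top)
    have le: "exp (\<epsilon> * (x j0 - x k) / 2) \<le> (\<Sum>j\<in>I. exp (\<epsilon> * (x j - x k) / 2))" for \<epsilon>
      by (rule member_le_sum[OF j0(1)]) (auto simp: I)
    have "filterlim (\<lambda>\<epsilon>. \<Sum>j\<in>I. exp (\<epsilon> * (x j - x k) / 2)) at_top at_top"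
      by (rule filterlim_at_top_mono[OF lim]) (simp add: le)
    then have "((\<lambda>\<epsilon>. inverse (\<Sum>j\<in>I. exp (\<epsilon> * (x j - x k) / 2))) \<longlongrightarrow> 0) at_top"
      by (rule tendsto_inverse_0_at_top)
    then show ?thesis unfolding eq amax_def M_def[symmetric] using False by (simp add: inverse_eq_divide)
  qed
qed

lemma amax_weighted:
  assumes I: "finite I" "I \<noteq> {}"
  shows "(\<Sum>k\<in>I. g (x k) * amax I x k) = g (Max (x ` I))"
proof -
  define M where "M = Max (x ` I)"
  define S where "S = {j\<in>I. x j = M}"
  have "M \<in> x ` I" unfolding M_def using I by (intro Max_in) auto
  then have "S \<noteq> {}" unfolding S_def by auto
  moreover have "finite S" using I unfolding S_def by auto
  ultimately have cS: "card S > 0" by (simp add: card_gt_0_iff)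
  have "(\<Sum>k\<in>I. g (x k) * amax I x k) = (\<Sum>k\<in>I. if x k = M then g M / real (card S) else 0)"
    unfolding amax_def M_def[symmetric] S_def[symmetric] by (rule sum.cong) auto
  also have "\<dots> = real (card S) * (g M / real (card S))"
    using I by (simp add: sum.If_cases S_def Int_def)
  also have "\<dots> = g M" using cS by simp
  finally show ?thesis unfolding M_def .
qed

lemma smax_weighted:
  assumes I: "finite I" "I \<noteq> {}" and mono: "\<And>k. k \<in> I \<Longrightarrow> g (x k) \<le> g (Max (x ` I))"
  shows "(\<Sum>k\<in>I. g (x k) * smax \<epsilon> I x k) \<le> g (Max (x ` I))"
    and "(\<exists>k\<in>I. g (x k) < g (Max (x ` I))) \<Longrightarrow> (\<Sum>k\<in>I. g (x k) * smax \<epsilon> I x k) < g (Max (x ` I))"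
proof -
  have "(\<Sum>k\<in>I. g (Max (x ` I)) * smax \<epsilon> I x k) = g (Max (x ` I))"
    using smax_sum[OF I] by (simp add: sum_distrib_left[symmetric])
  moreover have "(\<Sum>k\<in>I. g (x k) * smax \<epsilon> I x k) \<le> (\<Sum>k\<in>I. g (Max (x ` I)) * smax \<epsilon> I x k)"
    by (intro sum_mono mult_right_mono mono less_imp_le[OF smax_pos] I)
  ultimately show "(\<Sum>k\<in>I. g (x k) * smax \<epsilon> I x k) \<le> g (Max (x ` I))" by simp
  assume "\<exists>k\<in>I. g (x k) < g (Max (x ` I))"
  then have "(\<Sum>k\<in>I. g (x k) * smax \<epsilon> I x k) < (\<Sum>k\<in>I. g (Max (x ` I)) * smax \<epsilon> I x k)"
    by (intro sum_strict_mono_ex1 I ballI mult_right_mono mono less_imp_le[OF smax_pos])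
       (auto intro!: mult_strict_right_mono smax_pos I)
  with \<open>(\<Sum>k\<in>I. g (Max (x ` I)) * smax \<epsilon> I x k) = g (Max (x ` I))\<close>
  show "(\<Sum>k\<in>I. g (x k) * smax \<epsilon> I x k) < g (Max (x ` I))" by simp
qed

lemma smax_cong: "k \<in> I \<Longrightarrow> (\<And>j. j \<in> I \<Longrightarrow> x j = y j) \<Longrightarrow> smax \<epsilon> I x k = smax \<epsilon> I y k"
  unfolding smax_def by (auto intro!: sum.cong)

lemma smax_upd:
  assumes "finite J" "i \<notin> J"
  shows "smax \<epsilon> (insert i J) (x(i:=t)) i = exp (\<epsilon> * t / 2) / (exp (\<epsilon> * t / 2) + (\<Sum>j\<in>J. exp (\<epsilon> * x j / 2)))"
proof -
  have "(\<Sum>j\<in>J. exp (\<epsilon> * (x(i:=t)) j / 2)) = (\<Sum>j\<in>J. exp (\<epsilon> * x j / 2))"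
    using assms by (intro sum.cong) auto
  then show ?thesis unfolding smax_def using assms by simp
qed

lemma ratio_mono: "0 < (S::real) \<Longrightarrow> 0 < A \<Longrightarrow> A < B \<Longrightarrow> A / (A + S) < B / (B + S)"
  by (simp add: field_simps)

theorem theorem2:
  fixes F :: "('x \<times> nat \<times> nat) measure" and r :: "'x \<Rightarrow> real"
    and Rs :: "real set" and n :: nat
  assumes n: "n \<ge> 2"
    and F_prob: "prob_space F"
    and meas: "(\<lambda>w. (r (fst w), fst (snd w), snd (snd w))) \<in> measurable F (count_space UNIV)"
    and AY01: "\<forall>w \<in> space F. fst (snd w) \<in> {0, 1} \<and> snd (snd w) \<in> {0, 1}"
    and Rs_fin: "finite Rs" and Rs_sub: "Rs \<subseteq> {0..1}" and Rs0: "0 \<in> Rs" and Rs1: "1 \<in> Rs"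
    and r_range: "\<forall>w \<in> space F. r (fst w) \<in> Rs"
    and pos: "\<And>a. a \<in> {0, 1} \<Longrightarrow>
                 measure F {w \<in> space F. fst (snd w) = a \<and> snd (snd w) = 1} > 0"
    and mono_diff: "\<forall>\<rho>\<in>Rs. \<forall>\<rho>'\<in>Rs. \<rho> > \<rho>' \<longrightarrow>
                 fA F r 0 \<rho> - fA F r 1 \<rho> > fA F r 0 \<rho>' - fA F r 1 \<rho>'"
    and mono_fR: "\<forall>\<rho>\<in>Rs. \<forall>\<rho>'\<in>Rs. \<rho> > \<rho>' \<longrightarrow> fR F r \<rho> < fR F r \<rho>'"
    and nonneg: "\<forall>\<rho>\<in>Rs - {0}. fA F r 0 \<rho> - fA F r 1 \<rho> \<ge> 0"
  shows "\<forall>i\<in>{1..n}.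
           (\<forall>\<epsilon>>0. gamma F r n i \<epsilon> > 0) \<and>
           (\<exists>g_inf. (gamma F r n i \<longlongrightarrow> g_inf) at_top \<and> (\<forall>\<epsilon>\<ge>0. gamma F r n i \<epsilon> < g_inf))"
proof -
  interpret F: prob_space F by (rule F_prob)
  define T where "T = (\<lambda>w::'x \<times> nat \<times> nat. (r (fst w), fst (snd w), snd (snd w)))"
  have Tm: "T \<in> measurable F (count_space UNIV)" using meas unfolding T_def .
  define U where "U = ({0,1} \<times> {0,1} :: (nat \<times> nat) set)"
  define V where "V = Rs \<times> U"
  have Ufin: "finite U" unfolding U_def by simp
  have Vfin: "finite V" unfolding V_def using Rs_fin Ufin by simp
  have TV: "\<forall>w\<in>space F. T w \<in> V" using r_range AY01 unfolding T_def V_def U_def by auto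
  define p where "p v = measure F {w\<in>space F. T w = v}" for v
  have p_nn: "p v \<ge> 0" for v unfolding p_def by simp
  have ms: "{w\<in>space F. T w = v} \<in> sets F" for v
  proof -
    have "T -` {v} \<inter> space F \<in> sets F" by (rule measurable_sets[OF Tm]) auto
    moreover have "T -` {v} \<inter> space F = {w\<in>space F. T w = v}" by auto
    ultimately show ?thesis by simp
  qed
  have psum: "measure F {w\<in>space F. T w \<in> S} = (\<Sum>v\<in>S. p v)" if S: "finite S" for S
  proof -
    have "{w\<in>space F. T w \<in> S} = (\<Union>v\<in>S. {w\<in>space F. T w = v})" by auto
    moreover have "measure F (\<Union>v\<in>S. {w\<in>space F. T w = v}) = (\<Sum>v\<in>S. p v)"
      unfolding p_def
      by (rule F.finite_measure_finite_Union[OF S]) (auto simp: ms disjoint_family_on_def)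
    ultimately show ?thesis by simp
  qed
  have pV: "(\<Sum>v\<in>V. p v) = 1"
  proof -
    have "{w\<in>space F. T w \<in> V} = space F" using TV by auto
    then show ?thesis using psum[OF Vfin] F.prob_space by simp
  qed
  have fR_eq: "fR F r \<rho> = (\<Sum>u\<in>U. p (\<rho>, u))" for \<rho>
  proof -
    have "{w\<in>space F. r (fst w) = \<rho>} = {w\<in>space F. T w \<in> {\<rho>} \<times> U}"
      using AY01 unfolding T_def U_def by auto
    then have "fR F r \<rho> = (\<Sum>v\<in>{\<rho>} \<times> U. p v)" unfolding fR_def using psum[of "{\<rho>} \<times> U"] Ufin by simp
    also have "\<dots> = (\<Sum>u\<in>U. p (\<rho>, u))"
      by (rule sum.reindex_bij_witness[where i="\<lambda>u. (\<rho>, u)" and j=snd]) auto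
    finally show ?thesis .
  qed
  define q where "q a = measure F {w\<in>space F. fst (snd w) = a \<and> snd (snd w) = 1}" for a
  have q_eq: "q a = (\<Sum>\<rho>\<in>Rs. p (\<rho>, a, 1))" for a
  proof -
    have "{w\<in>space F. fst (snd w) = a \<and> snd (snd w) = 1} = {w\<in>space F. T w \<in> Rs \<times> {(a,1)}}"
      using r_range unfolding T_def by auto
    then have "q a = (\<Sum>v\<in>Rs \<times> {(a,1)}. p v)" unfolding q_def using psum[of "Rs \<times> {(a,1)}"] Rs_fin by simp
    also have "\<dots> = (\<Sum>\<rho>\<in>Rs. p (\<rho>, a, 1))"
      by (rule sum.reindex_bij_witness[where i="\<lambda>\<rho>. (\<rho>, a, 1)" and j=fst]) auto
    finally show ?thesis .
  qed
  have qpos: "a \<in> {0,1} \<Longrightarrow> q a > 0" for a unfolding q_def by (rule pos)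
  have fA_eq: "fA F r a \<rho> = p (\<rho>, a, 1) / q a" for a \<rho>
  proof -
    have "{w\<in>space F. r (fst w) = \<rho> \<and> fst (snd w) = a \<and> snd (snd w) = 1} = {w\<in>space F. T w = (\<rho>, a, 1)}"
      unfolding T_def by auto
    then show ?thesis unfolding fA_def cond_prob_def q_def p_def by simp
  qed
  have fA_nn: "a \<in> {0,1} \<Longrightarrow> fA F r a \<rho> \<ge> 0" for a \<rho>
    using qpos[of a] p_nn unfolding fA_eq by simp
  have fA_sum: "a \<in> {0,1} \<Longrightarrow> (\<Sum>\<rho>\<in>Rs. fA F r a \<rho>) = 1" for a
  proof -
    assume a: "a \<in> {0,1}"
    have "(\<Sum>\<rho>\<in>Rs. fA F r a \<rho>) = (\<Sum>\<rho>\<in>Rs. p (\<rho>, a, 1)) / q a"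
      unfolding fA_eq by (rule sum_divide_distrib[symmetric])
    also have "\<dots> = 1" unfolding q_eq[of a, symmetric] using qpos[OF a] by simp
    finally show ?thesis .
  qed
  define d where "d \<rho> = fA F r 0 \<rho> - fA F r 1 \<rho>" for \<rho>
  have d_sum: "(\<Sum>\<rho>\<in>Rs. d \<rho>) = 0"
    unfolding d_def using fA_sum[of 0] fA_sum[of 1] by (simp add: sum_subtractf)
  have d_mono: "\<rho> \<in> Rs \<Longrightarrow> \<rho>' \<in> Rs \<Longrightarrow> \<rho>' < \<rho> \<Longrightarrow> d \<rho>' < d \<rho>" for \<rho> \<rho>'
    using mono_diff unfolding d_def by auto
  have d_nn: "\<rho> \<in> Rs \<Longrightarrow> \<rho> \<noteq> 0 \<Longrightarrow> d \<rho> \<ge> 0" for \<rho>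
    using nonneg unfolding d_def by auto
  have d1: "d 1 > 0"
  proof (rule ccontr)
    assume "\<not> d 1 > 0"
    then have d1': "d 1 \<le> 0" by simp
    have "Rs \<subseteq> {0,1}"
    proof
      fix \<rho> assume \<rho>: "\<rho> \<in> Rs"
      show "\<rho> \<in> {0,1}"
      proof (rule ccontr)
        assume "\<rho> \<notin> {0,1}"
        then have "\<rho> \<noteq> 0" "\<rho> < 1" using Rs_sub \<rho> by auto
        then show False using d_nn[OF \<rho>] d_mono[OF Rs1 \<rho>] d1' by auto
      qed
    qed
    then have "Rs = {0,1}" using Rs0 Rs1 by auto
    then have "d 0 + d 1 = 0" using d_sum by simp
    moreover have "d 0 < d 1" using d_mono[OF Rs1 Rs0] by simp
    ultimately show False using d1' by simp
  qed
  have d0: "d 0 < 0"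
  proof -
    have "(\<Sum>\<rho>\<in>Rs. d \<rho>) = d 0 + (\<Sum>\<rho>\<in>Rs - {0}. d \<rho>)"
      using Rs0 Rs_fin by (simp add: sum.remove)
    moreover have "(\<Sum>\<rho>\<in>Rs - {0}. d \<rho>) \<ge> d 1"
      by (rule member_le_sum) (use Rs1 Rs_fin d_nn in auto)
    ultimately show ?thesis using d_sum d1 by simp
  qed
  have fR1: "fR F r 1 > 0"
  proof -
    have "fA F r 0 1 > 0" using d1 fA_nn[of 1 1] unfolding d_def by simp
    then have "p (1, 0, 1) > 0" using qpos[of 0] unfolding fA_eq by (simp add: zero_less_divide_iff)
    moreover have "p (1, 0, 1) \<le> fR F r 1" unfolding fR_eq
      by (rule member_le_sum) (auto simp: U_def p_nn)
    ultimately show ?thesis by simp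
  qed
  have fRpos: "\<rho> \<in> Rs \<Longrightarrow> fR F r \<rho> > 0" for \<rho>
  proof -
    assume \<rho>: "\<rho> \<in> Rs"
    show ?thesis
    proof (cases "\<rho> = 1")
      case True then show ?thesis using fR1 by simp
    next
      case False then have "\<rho> < 1" using Rs_sub \<rho> by auto
      then show ?thesis using mono_fR \<rho> Rs1 fR1 by force
    qed
  qed
  define ct where "ct \<rho> = d \<rho> / fR F r \<rho>" for \<rho>
  have ct_mono: "ct \<rho> \<le> ct \<rho>'" if \<rho>: "\<rho> \<in> Rs" "\<rho>' \<in> Rs" "\<rho> \<le> \<rho>'" for \<rho> \<rho>'
  proof (cases "\<rho> = \<rho>'")
    case True then show ?thesis by simp
  next
    case False
    then have lt: "\<rho> < \<rho>'" using \<rho> by simp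
    then have "\<rho>' \<noteq> 0" using Rs_sub \<rho> by auto
    then have dp': "d \<rho>' \<ge> 0" using d_nn \<rho> by simp
    show ?thesis
    proof (cases "\<rho> = 0")
      case True
      then have "ct \<rho> \<le> 0" unfolding ct_def using d0 fRpos[OF \<rho>(1)] by (simp add: divide_nonpos_pos)
      moreover have "ct \<rho>' \<ge> 0" unfolding ct_def using dp' fRpos[OF \<rho>(2)] by simp
      ultimately show ?thesis by simp
    next
      case False
      then have dp: "d \<rho> \<ge> 0" using d_nn \<rho> by simp
      have "d \<rho> < d \<rho>'" using d_mono \<rho> lt by simp
      have "fR F r \<rho>' < fR F r \<rho>" using mono_fR \<rho> lt by simp
      have "d \<rho> / fR F r \<rho> \<le> d \<rho>' / fR F r \<rho>"
        using \<open>d \<rho> < d \<rho>'\<close> fRpos[OF \<rho>(1)] by (simp add: divide_right_mono)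
      also have "\<dots> \<le> d \<rho>' / fR F r \<rho>'"
        using \<open>fR F r \<rho>' < fR F r \<rho>\<close> fRpos[OF \<rho>(2)] dp' by (simp add: divide_left_mono)
      finally show ?thesis unfolding ct_def .
    qed
  qed
  have ct01: "ct 0 < ct 1"
  proof -
    have "ct 0 < 0" unfolding ct_def using d0 fRpos[OF Rs0] by (simp add: divide_neg_pos)
    moreover have "ct 1 > 0" unfolding ct_def using d1 fR1 by simp
    ultimately show ?thesis by simp
  qed
  show ?thesis
  proof
    fix i assume i: "i \<in> {1..n}"
    define I where "I = {1..n}"
    define J where "J = I - {i}"
    have iI: "i \<in> I" using i I_def by simp
    have Ifin: "finite I" by (simp add: I_def)
    have IJ: "I = insert i J" "i \<notin> J" "finite J" using iI Ifin by (auto simp: J_def)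
    define j1 where "j1 = (if i = 1 then 2 else (1::nat))"
    have j1: "j1 \<in> J" using i n unfolding J_def I_def j1_def by auto
    have Jne: "J \<noteq> {}" using j1 by auto
    have cardI: "card I = n" by (simp add: I_def)
    interpret P: finite_product_prob_space "\<lambda>_. F" I by unfold_locales (rule Ifin)
    have popI: "pop F n = PiM I (\<lambda>_. F)" unfolding pop_def I_def ..
    define PJ where "PJ c = (\<Prod>j\<in>J. p (c j))" for c :: "nat \<Rightarrow> real \<times> nat \<times> nat"
    define PI where "PI c = (\<Prod>j\<in>I. p (c j))" for c :: "nat \<Rightarrow> real \<times> nat \<times> nat"
    define G where "G \<epsilon> \<rho> = (\<Sum>c\<in>PiE J (\<lambda>_. V). PJ c * smax \<epsilon> I ((\<lambda>j. fst (c j))(i:=\<rho>)) i)" for \<epsilon> \<rho>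
    have PI_upd: "PI (c(i:=v)) = p v * PJ c" for c v
    proof -
      have "PI (c(i:=v)) = p v * (\<Prod>j\<in>J. p ((c(i:=v)) j))"
        unfolding PI_def IJ(1) using IJ by simp
      also have "(\<Prod>j\<in>J. p ((c(i:=v)) j)) = PJ c"
        unfolding PJ_def using IJ(2) by (intro prod.cong) auto
      finally show ?thesis .
    qed
    have fst_upd: "(\<lambda>j. fst ((c(i:=v)) j)) = (\<lambda>j. fst (c j))(i := fst v)" for c v
      by (simp add: fun_eq_iff)
    have int_eq: "(\<integral>\<omega>. \<Phi> (\<lambda>j\<in>I. T (\<omega> j)) \<partial>PiM I (\<lambda>_. F)) = (\<Sum>c\<in>PiE I (\<lambda>_. V). \<Phi> c * PI c)" for \<Phi>
      unfolding PI_def p_def by (rule integral_PiM_finite[OF F_prob Ifin Tm TV Vfin])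
    have fold: "(\<Sum>c\<in>PiE I (\<lambda>_. V). \<Psi> c * PI c) = (\<Sum>v\<in>V. \<Sum>c\<in>PiE J (\<lambda>_. V). \<Psi> (c(i:=v)) * (p v * PJ c))" for \<Psi>
    proof -
      have "(\<Sum>c\<in>PiE I (\<lambda>_. V). \<Psi> c * PI c) = (\<Sum>c\<in>PiE (insert i J) (\<lambda>_. V). \<Psi> c * PI c)"
        by (simp only: IJ(1))
      also have "\<dots> = (\<Sum>v\<in>V. \<Sum>c\<in>PiE J (\<lambda>_. V). \<Psi> (c(i:=v)) * PI (c(i:=v)))"
        by (rule sum_PiE_insert[OF IJ(3) IJ(2) Vfin])
      finally show ?thesis by (simp add: PI_upd)
    qed
    have A1: "cond_expect (pop F n) (Zsel n r i \<epsilon>) (\<lambda>\<omega>. fst (snd (\<omega> i)) = a \<and> snd (snd (\<omega> i)) = 1)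
              = (\<Sum>\<rho>\<in>Rs. fA F r a \<rho> * G \<epsilon> \<rho>)" if a: "a \<in> {0,1}" for a \<epsilon>
    proof -
      define B where "B = {\<omega> \<in> space (PiM I (\<lambda>_. F)). fst (snd (\<omega> i)) = a \<and> snd (snd (\<omega> i)) = 1}"
      define \<Phi> where "\<Phi> c = smax \<epsilon> I (\<lambda>j. fst (c j)) i * (if snd (c i) = (a,1) then 1 else 0)"
        for c :: "nat \<Rightarrow> real \<times> nat \<times> nat"
      have num1: "(\<integral>\<omega>. Zsel n r i \<epsilon> \<omega> * indicator B \<omega> \<partial>PiM I (\<lambda>_. F))
                 = (\<integral>\<omega>. \<Phi> (\<lambda>j\<in>I. T (\<omega> j)) \<partial>PiM I (\<lambda>_. F))"
      proof (rule Bochner_Integration.integral_cong[OF refl])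
        fix \<omega> assume om: "\<omega> \<in> space (PiM I (\<lambda>_. F))"
        have "Zsel n r i \<epsilon> \<omega> = smax \<epsilon> I (\<lambda>j. r (fst (\<omega> j))) i"
          unfolding Zsel_def smax_def I_def by simp
        also have "\<dots> = smax \<epsilon> I (\<lambda>j. fst ((\<lambda>j\<in>I. T (\<omega> j)) j)) i"
          by (rule smax_cong[OF iI]) (simp add: T_def)
        finally have z: "Zsel n r i \<epsilon> \<omega> = smax \<epsilon> I (\<lambda>j. fst ((\<lambda>j\<in>I. T (\<omega> j)) j)) i" .
        have "indicator B \<omega> = (if snd ((\<lambda>j\<in>I. T (\<omega> j)) i) = (a,1) then 1 else (0::real))"
          using om iI unfolding B_def T_def by (auto simp: indicator_def prod_eq_iff)
        with z show "Zsel n r i \<epsilon> \<omega> * indicator B \<omega> = \<Phi> (\<lambda>j\<in>I. T (\<omega> j))"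
          unfolding \<Phi>_def by simp
      qed
      have num2: "(\<integral>\<omega>. \<Phi> (\<lambda>j\<in>I. T (\<omega> j)) \<partial>PiM I (\<lambda>_. F)) = (\<Sum>\<rho>\<in>Rs. p (\<rho>,a,1) * G \<epsilon> \<rho>)"
      proof -
        have "(\<integral>\<omega>. \<Phi> (\<lambda>j\<in>I. T (\<omega> j)) \<partial>PiM I (\<lambda>_. F))
              = (\<Sum>v\<in>V. \<Sum>c\<in>PiE J (\<lambda>_. V). \<Phi> (c(i:=v)) * (p v * PJ c))"
          unfolding int_eq fold ..
        also have "\<dots> = (\<Sum>v\<in>V. if snd v = (a,1) then p v * G \<epsilon> (fst v) else 0)"
        proof (rule sum.cong[OF refl])
          fix v
          have "(\<Sum>c\<in>PiE J (\<lambda>_. V). \<Phi> (c(i:=v)) * (p v * PJ c))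
                = (\<Sum>c\<in>PiE J (\<lambda>_. V). (if snd v = (a,1) then p v else 0) * (PJ c * smax \<epsilon> I ((\<lambda>j. fst (c j))(i:=fst v)) i))"
            unfolding \<Phi>_def fst_upd by (intro sum.cong refl) auto
          also have "\<dots> = (if snd v = (a,1) then p v * G \<epsilon> (fst v) else 0)"
            unfolding G_def by (simp add: sum_distrib_left[symmetric])
          finally show "(\<Sum>c\<in>PiE J (\<lambda>_. V). \<Phi> (c(i:=v)) * (p v * PJ c)) = (if snd v = (a,1) then p v * G \<epsilon> (fst v) else 0)" .
        qed
        also have "\<dots> = (\<Sum>\<rho>\<in>Rs. \<Sum>u\<in>U. if u = (a,1) then p (\<rho>,u) * G \<epsilon> \<rho> else 0)"
          unfolding V_def sum.cartesian_product by (intro sum.cong) auto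
        also have "\<dots> = (\<Sum>\<rho>\<in>Rs. p (\<rho>,a,1) * G \<epsilon> \<rho>)"
          using a Ufin by (intro sum.cong refl) (simp add: sum.delta' U_def)
        finally show ?thesis .
      qed
      have den: "measure (PiM I (\<lambda>_. F)) B = q a"
      proof -
        define Sa where "Sa = {w\<in>space F. fst (snd w) = a \<and> snd (snd w) = 1}"
        have Sa_sets: "Sa \<in> sets F"
        proof -
          have "Sa = {w\<in>space F. T w \<in> Rs \<times> {(a,1)}}" unfolding Sa_def T_def using r_range by auto
          also have "\<dots> = T -` (Rs \<times> {(a,1)}) \<inter> space F" by auto
          also have "\<dots> \<in> sets F" by (rule measurable_sets[OF Tm]) auto
          finally show ?thesis .
        qed
        have "B = PiE I (\<lambda>j. if j = i then Sa else space F)"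
        proof (rule set_eqI)
          fix \<omega>
          show "\<omega> \<in> B \<longleftrightarrow> \<omega> \<in> PiE I (\<lambda>j. if j = i then Sa else space F)"
          proof
            assume "\<omega> \<in> B"
            then show "\<omega> \<in> PiE I (\<lambda>j. if j = i then Sa else space F)"
              unfolding B_def Sa_def by (auto simp: space_PiM PiE_iff)
          next
            assume h: "\<omega> \<in> PiE I (\<lambda>j. if j = i then Sa else space F)"
            then have "\<omega> i \<in> Sa" using iI PiE_mem[OF h iI] by simp
            moreover have "\<omega> j \<in> space F" if "j \<in> I" for j
              using PiE_mem[OF h that] unfolding Sa_def by (auto split: if_splits)
            moreover have "\<omega> \<in> extensional I" using h by (simp add: PiE_iff)
            ultimately show "\<omega> \<in> B" unfolding B_def Sa_def by (auto simp: space_PiM PiE_iff)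
          qed
        qed
        then have "measure (PiM I (\<lambda>_. F)) B = (\<Prod>j\<in>I. measure F (if j = i then Sa else space F))"
          using Sa_sets by (simp add: P.prob_times)
        also have "\<dots> = (\<Prod>j\<in>I. if j = i then measure F Sa else 1)"
          by (intro prod.cong) (auto simp: F.prob_space)
        also have "\<dots> = measure F Sa" using iI Ifin by (simp add: prod.delta')
        finally show ?thesis unfolding q_def Sa_def .
      qed
      have "cond_expect (pop F n) (Zsel n r i \<epsilon>) (\<lambda>\<omega>. fst (snd (\<omega> i)) = a \<and> snd (snd (\<omega> i)) = 1)
            = (\<Sum>\<rho>\<in>Rs. p (\<rho>,a,1) * G \<epsilon> \<rho>) / q a"
        unfolding cond_expect_def popI B_def[symmetric] num1 num2 den ..
      also have "\<dots> = (\<Sum>\<rho>\<in>Rs. fA F r a \<rho> * G \<epsilon> \<rho>)"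
        unfolding fA_eq sum_divide_distrib by (intro sum.cong) auto
      finally show ?thesis .
    qed
    have gammaG: "gamma F r n i \<epsilon> = (\<Sum>\<rho>\<in>Rs. d \<rho> * G \<epsilon> \<rho>)" for \<epsilon>
      using A1[of 0 \<epsilon>] A1[of 1 \<epsilon>] unfolding gamma_def d_def by (simp add: sum_subtractf left_diff_distrib)
    have PJ_nn: "PJ c \<ge> 0" for c by (simp add: PJ_def prod_nonneg p_nn)
    have PI_nn: "PI c \<ge> 0" for c by (simp add: PI_def prod_nonneg p_nn)
    have PJsum: "(\<Sum>c\<in>PiE J (\<lambda>_. V). PJ c) = 1"
    proof -
      have "(\<Prod>j\<in>J. \<Sum>v\<in>V. p v) = (\<Sum>c\<in>PiE J (\<lambda>_. V). \<Prod>j\<in>J. p (c j))"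
        by (rule prod_sum_PiE) (use IJ(3) Vfin in auto)
      then show ?thesis unfolding PJ_def pV by simp
    qed
    have "\<exists>c\<in>PiE J (\<lambda>_. V). PJ c > 0"
    proof (rule ccontr)
      assume "\<not> ?thesis"
      then have "\<forall>c\<in>PiE J (\<lambda>_. V). PJ c \<le> 0" by auto
      then have "(\<Sum>c\<in>PiE J (\<lambda>_. V). PJ c) \<le> 0" by (intro sum_nonpos) auto
      with PJsum show False by simp
    qed
    then obtain c0 where c0: "c0 \<in> PiE J (\<lambda>_. V)" "PJ c0 > 0" by blast
    have Sj_pos: "(\<Sum>j\<in>J. exp (\<epsilon> * fst (c j) / 2)) > (0::real)" for \<epsilon> :: real and c :: "nat \<Rightarrow> real \<times> nat \<times> nat"
      by (rule sum_pos) (use IJ(3) Jne in auto)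
    have smaxJ: "smax \<epsilon> I ((\<lambda>j. fst (c j))(i:=\<rho>)) i
        = exp (\<epsilon> * \<rho> / 2) / (exp (\<epsilon> * \<rho> / 2) + (\<Sum>j\<in>J. exp (\<epsilon> * fst (c j) / 2)))" for \<epsilon> \<rho> and c :: "nat \<Rightarrow> real \<times> nat \<times> nat"
      unfolding IJ(1) by (rule smax_upd[OF IJ(3) IJ(2)])
    have Gmono: "G \<epsilon> \<rho> - G \<epsilon> 0 > 0" if e: "\<epsilon> > 0" and rp: "\<rho> > 0" for \<epsilon> \<rho>
    proof -
      have Zlt: "smax \<epsilon> I ((\<lambda>j. fst (c j))(i:=0)) i < smax \<epsilon> I ((\<lambda>j. fst (c j))(i:=\<rho>)) i" for c :: "nat \<Rightarrow> real \<times> nat \<times> nat"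
      proof -
        have "exp (\<epsilon> * 0 / 2) < exp (\<epsilon> * \<rho> / 2)" using e rp by simp
        then show ?thesis unfolding smaxJ by (intro ratio_mono) (auto simp: Sj_pos)
      qed
      have "G \<epsilon> \<rho> - G \<epsilon> 0 = (\<Sum>c\<in>PiE J (\<lambda>_. V). PJ c * (smax \<epsilon> I ((\<lambda>j. fst (c j))(i:=\<rho>)) i - smax \<epsilon> I ((\<lambda>j. fst (c j))(i:=0)) i))"
        unfolding G_def by (simp add: sum_subtractf right_diff_distrib)
      also have "\<dots> > 0"
        by (rule sum_pos2[OF _ c0(1)]) (use Zlt c0 PJ_nn IJ(3) Vfin in \<open>auto intro!: mult_pos_pos mult_nonneg_nonneg finite_PiE simp: less_imp_le\<close>)
      finally show ?thesis .
    qed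
    have part1: "gamma F r n i \<epsilon> > 0" if e: "\<epsilon> > 0" for \<epsilon>
    proof -
      have "gamma F r n i \<epsilon> = (\<Sum>\<rho>\<in>Rs. d \<rho> * (G \<epsilon> \<rho> - G \<epsilon> 0)) + (\<Sum>\<rho>\<in>Rs. d \<rho>) * G \<epsilon> 0"
        unfolding gammaG by (simp add: right_diff_distrib sum_subtractf sum_distrib_right)
      also have "\<dots> = (\<Sum>\<rho>\<in>Rs. d \<rho> * (G \<epsilon> \<rho> - G \<epsilon> 0))" using d_sum by simp
      also have "\<dots> > 0"
      proof (rule sum_pos2[OF Rs_fin Rs1])
        show "0 < d 1 * (G \<epsilon> 1 - G \<epsilon> 0)" using d1 Gmono[OF e, of 1] by simp
        fix \<rho> assume \<rho>: "\<rho> \<in> Rs"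
        show "0 \<le> d \<rho> * (G \<epsilon> \<rho> - G \<epsilon> 0)"
        proof (cases "\<rho> = 0")
          case True then show ?thesis by simp
        next
          case False
          then have "\<rho> > 0" using Rs_sub \<rho> by force
          then show ?thesis using d_nn[OF \<rho> False] Gmono[OF e] by (simp add: less_imp_le)
        qed
      qed
      finally show ?thesis .
    qed
    define C where "C = PiE I (\<lambda>_. V)"
    have Cfin: "finite C" unfolding C_def using Ifin Vfin by (simp add: finite_PiE)
    define xs where "xs c = (\<lambda>j. fst (c j))" for c :: "nat \<Rightarrow> real \<times> nat \<times> nat"
    have A2: "(\<Sum>\<rho>\<in>Rs. d \<rho> * G \<epsilon> \<rho>) = (\<Sum>c\<in>C. (ct (fst (c i)) * smax \<epsilon> I (xs c) i) * PI c)" for \<epsilon>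
    proof -
      have "(\<Sum>c\<in>C. (ct (fst (c i)) * smax \<epsilon> I (xs c) i) * PI c)
          = (\<Sum>v\<in>V. \<Sum>c\<in>PiE J (\<lambda>_. V). (ct (fst v) * smax \<epsilon> I (\<lambda>j. fst ((c(i:=v)) j)) i) * (p v * PJ c))"
        unfolding C_def xs_def fold by simp
      also have "\<dots> = (\<Sum>v\<in>V. p v * ct (fst v) * G \<epsilon> (fst v))"
        unfolding fst_upd G_def by (intro sum.cong refl) (simp add: sum_distrib_left ac_simps)
      also have "\<dots> = (\<Sum>\<rho>\<in>Rs. \<Sum>u\<in>U. p (\<rho>,u) * ct \<rho> * G \<epsilon> \<rho>)"
        unfolding V_def sum.cartesian_product by (intro sum.cong) auto
      also have "\<dots> = (\<Sum>\<rho>\<in>Rs. fR F r \<rho> * ct \<rho> * G \<epsilon> \<rho>)"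
        unfolding fR_eq by (simp add: sum_distrib_right)
      also have "\<dots> = (\<Sum>\<rho>\<in>Rs. d \<rho> * G \<epsilon> \<rho>)"
        using fRpos unfolding ct_def by (intro sum.cong refl) (simp add: less_imp_neq[symmetric])
      finally show ?thesis by simp
    qed
    have A3: "(\<Sum>c\<in>C. (ct (fst (c i)) * smax \<epsilon> I (xs c) i) * PI c)
            = (\<Sum>c\<in>C. (ct (fst (c k)) * smax \<epsilon> I (xs c) k) * PI c)" if k: "k \<in> I" for \<epsilon> k
    proof -
      have eqh: "(ct (fst ((c \<circ> sw i k) k)) * smax \<epsilon> I (xs (c \<circ> sw i k)) k) * PI (c \<circ> sw i k)
               = (ct (fst (c i)) * smax \<epsilon> I (xs c) i) * PI c" for c
      proof -
        have "sw i k k = i" by (simp add: sw_def)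
        moreover have "PI (c \<circ> sw i k) = PI c"
          unfolding PI_def comp_def by (rule prod_sw[OF iI k, of "\<lambda>j. p (c j)"])
        moreover have "(\<Sum>j\<in>I. exp (\<epsilon> * fst (c (sw i k j)) / 2)) = (\<Sum>j\<in>I. exp (\<epsilon> * fst (c j) / 2))"
          by (rule sum_sw[OF iI k, of "\<lambda>j. exp (\<epsilon> * fst (c j) / 2)"])
        ultimately show ?thesis unfolding smax_def xs_def by simp
      qed
      have "(\<Sum>c\<in>C. (ct (fst (c k)) * smax \<epsilon> I (xs c) k) * PI c)
          = (\<Sum>c\<in>C. (ct (fst ((c \<circ> sw i k) k)) * smax \<epsilon> I (xs (c \<circ> sw i k)) k) * PI (c \<circ> sw i k))"
        unfolding C_def by (rule sum_PiE_sw[OF iI k, symmetric])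
      then show ?thesis unfolding eqh by simp
    qed
    define H where "H \<epsilon> c = (\<Sum>k\<in>I. ct (fst (c k)) * smax \<epsilon> I (xs c) k)" for \<epsilon> c
    define Hinf where "Hinf c = (\<Sum>k\<in>I. ct (fst (c k)) * amax I (xs c) k)" for c
    have gammaH: "gamma F r n i \<epsilon> = (1 / real n) * (\<Sum>c\<in>C. PI c * H \<epsilon> c)" for \<epsilon>
    proof -
      have "real n * gamma F r n i \<epsilon> = (\<Sum>k\<in>I. \<Sum>c\<in>C. (ct (fst (c k)) * smax \<epsilon> I (xs c) k) * PI c)"
      proof -
        have "(\<Sum>k\<in>I. \<Sum>c\<in>C. (ct (fst (c k)) * smax \<epsilon> I (xs c) k) * PI c)
            = (\<Sum>k\<in>I. \<Sum>c\<in>C. (ct (fst (c i)) * smax \<epsilon> I (xs c) i) * PI c)"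
          by (rule sum.cong[OF refl]) (rule A3[symmetric])
        then show ?thesis unfolding gammaG A2 using cardI by simp
      qed
      also have "\<dots> = (\<Sum>c\<in>C. PI c * H \<epsilon> c)"
        unfolding H_def by (subst sum.swap) (simp add: sum_distrib_left ac_simps)
      finally show ?thesis using n by (simp add: field_simps)
    qed
    define g_inf where "g_inf = (1 / real n) * (\<Sum>c\<in>C. PI c * Hinf c)"
    have lim: "(gamma F r n i \<longlongrightarrow> g_inf) at_top"
    proof -
      have "((\<lambda>\<epsilon>. (1 / real n) * (\<Sum>c\<in>C. PI c * H \<epsilon> c)) \<longlongrightarrow> g_inf) at_top"
        unfolding g_inf_def H_def Hinf_def
        by (intro tendsto_mult tendsto_const tendsto_sum smax_lim Ifin)
      moreover have "gamma F r n i = (\<lambda>\<epsilon>. (1 / real n) * (\<Sum>c\<in>C. PI c * H \<epsilon> c))"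
        using gammaH by (simp add: fun_eq_iff)
      ultimately show ?thesis by simp
    qed
    have xs_mem: "xs c k \<in> Rs" if "c \<in> C" "k \<in> I" for c k
      using that unfolding C_def V_def xs_def by (auto simp: PiE_iff)
    have Max_mem: "Max (xs c ` I) \<in> Rs" if "c \<in> C" for c
    proof -
      have "Max (xs c ` I) \<in> xs c ` I" using Ifin iI by (intro Max_in) auto
      then show ?thesis using xs_mem[OF that] by auto
    qed
    have ct_le: "ct (xs c k) \<le> ct (Max (xs c ` I))" if "c \<in> C" "k \<in> I" for c k
      by (rule ct_mono[OF xs_mem[OF that] Max_mem[OF that(1)]]) (use Ifin that(2) in auto)
    have Ine: "I \<noteq> {}" using iI by auto
    have H_alt: "H \<epsilon> c = (\<Sum>k\<in>I. ct (xs c k) * smax \<epsilon> I (xs c) k)" for \<epsilon> c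
      unfolding H_def xs_def ..
    have Hinf_eq: "Hinf c = ct (Max (xs c ` I))" for c
      unfolding Hinf_def using amax_weighted[OF Ifin Ine, of ct "xs c"] unfolding xs_def .
    have H_le: "H \<epsilon> c \<le> Hinf c" if "c \<in> C" for \<epsilon> c
      unfolding H_alt Hinf_eq by (rule smax_weighted(1)[OF Ifin Ine]) (rule ct_le[OF that])
    have "\<exists>u\<in>U. p (1,u) > 0"
    proof (rule ccontr)
      assume "\<not> ?thesis"
      then have "(\<Sum>u\<in>U. p (1,u)) \<le> 0" by (intro sum_nonpos) auto
      with fR1 show False unfolding fR_eq by simp
    qed
    then obtain u1 where u1: "u1 \<in> U" "p (1,u1) > 0" by blast
    have "\<exists>u\<in>U. p (0,u) > 0"
    proof (rule ccontr)
      assume "\<not> ?thesis"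
      then have "(\<Sum>u\<in>U. p (0,u)) \<le> 0" by (intro sum_nonpos) auto
      with fRpos[OF Rs0] show False unfolding fR_eq by simp
    qed
    then obtain u0 where u0: "u0 \<in> U" "p (0,u0) > 0" by blast
    define cs where "cs = (\<lambda>j\<in>I. if j = i then (1::real, u1) else (0, u0))"
    have cs_C: "cs \<in> C" unfolding cs_def C_def V_def using u1 u0 Rs0 Rs1 by (auto simp: PiE_iff)
    have PI_cs: "PI cs > 0" unfolding PI_def cs_def
      by (rule prod_pos) (use u1 u0 in auto)
    have Max_cs: "Max (xs cs ` I) = 1"
    proof (rule Max_eqI)
      show "finite (xs cs ` I)" using Ifin by simp
      show "y \<le> 1" if "y \<in> xs cs ` I" for y using that unfolding xs_def cs_def by auto
      show "1 \<in> xs cs ` I" using iI unfolding xs_def cs_def by force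
    qed
    have j1I: "j1 \<in> I" "j1 \<noteq> i" using j1 unfolding J_def by auto
    have H_lt: "H \<epsilon> cs < Hinf cs" for \<epsilon>
    proof -
      have "xs cs j1 = 0" using j1I unfolding xs_def cs_def by simp
      then have "\<exists>k\<in>I. ct (xs cs k) < ct (Max (xs cs ` I))" using j1I(1) ct01 Max_cs by force
      then show ?thesis unfolding H_alt Hinf_eq
        using smax_weighted(2)[OF Ifin Ine, of ct "xs cs" \<epsilon>] ct_le[OF cs_C] by blast
    qed
    have part2: "gamma F r n i \<epsilon> < g_inf" for \<epsilon>
    proof -
      have "g_inf - gamma F r n i \<epsilon> = (1 / real n) * (\<Sum>c\<in>C. PI c * (Hinf c - H \<epsilon> c))"
        unfolding gammaH g_inf_def by (simp add: sum_subtractf right_diff_distrib)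
      also have "\<dots> > 0"
      proof (rule mult_pos_pos)
        show "0 < 1 / real n" using n by simp
        show "0 < (\<Sum>c\<in>C. PI c * (Hinf c - H \<epsilon> c))"
          by (rule sum_pos2[OF Cfin cs_C]) (use PI_cs H_lt H_le PI_nn in \<open>auto intro!: mult_nonneg_nonneg\<close>)
      qed
      finally show ?thesis by simp
    qed
    show "(\<forall>\<epsilon>>0. gamma F r n i \<epsilon> > 0) \<and>
           (\<exists>g_inf. (gamma F r n i \<longlongrightarrow> g_inf) at_top \<and> (\<forall>\<epsilon>\<ge>0. gamma F r n i \<epsilon> < g_inf))"
      using part1 lim part2 by blast
  qed
qed

end
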